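(* Let $X$ be a non-negative random variable with distribution function $F$ and finite mean $\mu=\mathbb{E}(X)>0$, and let $m\geqslant 2$ be an integer. Then \[ IG_{m;\min}=\frac{1}{m}\,G_m(F),\qquad IG_{m;\max}=\left(1-\frac{1}{m}\right)D_{m-1}(F), \] where, with $U\sim U(0,1)$ uniform and $L(p)=\frac{1}{\mu}\int_0^p F^{-1}(t)\,{\rm d}t$ ($0\leqslant p\leqslant 1$) the Lorenz curve of $X$, \[ D_n(F)=(n+1)\,\mathbb{E}\big[\{U-L(U)\}U^{n-1}\big],\qquad G_n(F)=n(n-1)\,\mathbb{E}\big[\{U-L(U)\}(1-U)^{n-2}\big],\qquad n\geqslant 1. \]
   Context: For an integer $m\geqslant 2$ and i.i.d. copies $X_1,\ldots,X_m$ of $X$, the extended lower Gini index is $IG_{m;\min}=\dfrac{\mathbb{E}[X_1-\min\{X_1,\ldots,X_m\}]}{m\mu}$ and the extended upper Gini index is $IG_{m;\max}=\dfrac{\mathbb{E}[\max\{X_1,\ldots,X_m\}-X_1]}{m\mu}$. $F^{-1}$ denotes the quantile function (generalized inverse) of $F$. *)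

theory Defs
  imports "HOL-Probability.Probability"
begin

definition cdf_of :: "'a measure \<Rightarrow> ('a \<Rightarrow> real) \<Rightarrow> real \<Rightarrow> real" where
  "cdf_of M X x = measure M {\<omega> \<in> space M. X \<omega> \<le> x}"

definition quantile_fn :: "(real \<Rightarrow> real) \<Rightarrow> real \<Rightarrow> real" where
  "quantile_fn F t = Inf {x. t \<le> F x}"

definition mean_of :: "'a measure \<Rightarrow> ('a \<Rightarrow> real) \<Rightarrow> real" where
  "mean_of M X = (\<integral>\<omega>. X \<omega> \<partial>M)"

definition lorenz :: "'a measure \<Rightarrow> ('a \<Rightarrow> real) \<Rightarrow> real \<Rightarrow> real" where
  "lorenz M X p = (1 / mean_of M X) *
     (\<integral>t\<in>{0..p}. quantile_fn (cdf_of M X) t \<partial>lborel)"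

definition iid_copies :: "'a measure \<Rightarrow> ('a \<Rightarrow> real) \<Rightarrow> nat \<Rightarrow> (nat \<Rightarrow> real) measure" where
  "iid_copies M X m = PiM {..<m} (\<lambda>_. distr M borel X)"

definition IG_min :: "'a measure \<Rightarrow> ('a \<Rightarrow> real) \<Rightarrow> nat \<Rightarrow> real" where
  "IG_min M X m = (\<integral>x. x 0 - Min (x ` {..<m}) \<partial>iid_copies M X m) / (real m * mean_of M X)"

definition IG_max :: "'a measure \<Rightarrow> ('a \<Rightarrow> real) \<Rightarrow> nat \<Rightarrow> real" where
  "IG_max M X m = (\<integral>x. Max (x ` {..<m}) - x 0 \<partial>iid_copies M X m) / (real m * mean_of M X)"

abbreviation unif01 :: "real measure" where
  "unif01 \<equiv> uniform_measure lborel {0..1::real}"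

definition D_index :: "'a measure \<Rightarrow> ('a \<Rightarrow> real) \<Rightarrow> nat \<Rightarrow> real" where
  "D_index M X n = real (n + 1) * (\<integral>u. (u - lorenz M X u) * u ^ (n - 1) \<partial>unif01)"

definition G_index :: "'a measure \<Rightarrow> ('a \<Rightarrow> real) \<Rightarrow> nat \<Rightarrow> real" where
  "G_index M X n = real n * (real n - 1) * (\<integral>u. (u - lorenz M X u) * (1 - u) ^ (n - 2) \<partial>unif01)"

end

theory Submission
  imports Defs
begin


lemma fA: fixes x :: real shows "x / real (k + 1) - x / real (k + 2) = x / (real (k + 1) * real (k + 2))"
  by (simp add: field_simps)
lemma pA: fixes b :: real shows "b * b ^ (k + 1) = b ^ (k + 2)"
  by (simp add: power_Suc[symmetric] del: power_Suc)
lemma fB: fixes a :: real shows "(1/real (k+2) - a / real (k+1)) - (a ^ (k + 2) / real (k + 2) - a * a ^ (k + 1) / real (k + 1)) = (1 - a ^ (k + 2)) / real (k + 2) - a * (1 - a ^ (k + 1)) / real (k + 1)"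
  by (simp add: diff_divide_distrib right_diff_distrib)

lemma intA:
  fixes a :: real and k :: nat assumes "a \<le> 1"
  shows "(\<integral>u\<in>{a..1}. (u - a) * (1 - u) ^ k \<partial>lborel) = (1 - a) ^ (k + 2) / (real (k + 1) * real (k + 2))"
proof -
  define G where "G u = - (1 - a) * (1 - u) ^ (k + 1) / (k + 1) + (1 - u) ^ (k + 2) / (k + 2)" for u :: real
  have d: "(G has_real_derivative (u - a) * (1 - u) ^ k) (at u)" for u
  proof -
    have "(G has_real_derivative (- (1 - a) * ((real (k+1)) * (1 - u) ^ k * (-1)) / (real (k + 1)) + ((real (k+2)) * (1 - u) ^ (k + 1) * (-1)) / (real (k + 2)))) (at u)"
      unfolding G_def by (rule derivative_eq_intros refl | simp)+
    moreover have "(- (1 - a) * ((real (k+1)) * (1 - u) ^ k * (-1)) / (real (k + 1)) + ((real (k+2)) * (1 - u) ^ (k + 1) * (-1)) / (real (k + 2))) = (u - a) * (1 - u) ^ k"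
    proof -
      have h1: "real (k + 1) \<noteq> 0" "real (k+2) \<noteq> 0" by auto
      have e1: "(- (1 - a) * ((real (k+1)) * (1 - u) ^ k * (-1)) / (real (k + 1))) = (1 - a) * (1 - u) ^ k"
        using h1(1) by (simp add: field_split_simps)
      have e2: "((real (k+2)) * (1 - u) ^ (k + 1) * (-1)) / (real (k + 2)) = - ((1 - u) * (1 - u) ^ k)"
        using h1(2) by (simp add: field_split_simps)
      show ?thesis unfolding e1 e2 by (simp add: algebra_simps)
    qed
    ultimately show ?thesis by simp
  qed
  have "(LBINT u=a..(1::real). (u - a) * (1 - u) ^ k) = G 1 - G a"
    using assms
    by (intro interval_integral_FTC_finite continuous_intros)
       (auto simp: has_real_derivative_iff_has_vector_derivative[symmetric] intro: DERIV_subset[OF d])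
  moreover have "G 1 - G a = (1 - a) ^ (k + 2) / (real (k + 1) * real (k + 2))"
  proof -
    have "G 1 - G a = (1 - a) ^ (k + 2) / real (k + 1) - (1 - a) ^ (k + 2) / real (k + 2)"
    proof -
      have e: "- (1 - a) * (1 - a) ^ (k + 1) = - ((1 - a) ^ (k + 2))" using pA[of "1 - a" k] by (simp only: minus_mult_left)
      show ?thesis unfolding G_def e by simp
    qed
    then show ?thesis using fA[of "(1 - a) ^ (k + 2)" k] by (simp only:)
  qed
  ultimately show ?thesis using assms by (simp add: interval_integral_Icc)
qed

lemma intB:
  fixes a :: real and k :: nat assumes "a \<le> 1"
  shows "(\<integral>u\<in>{a..1}. (u - a) * u ^ k \<partial>lborel) = (1 - a ^ (k + 2)) / (k + 2) - a * (1 - a ^ (k + 1)) / (k + 1)"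
proof -
  define G where "G u = u ^ (k + 2) / (k + 2) - a * u ^ (k + 1) / (k + 1)" for u :: real
  have d: "(G has_real_derivative (u - a) * u ^ k) (at u)" for u
  proof -
    have "(G has_real_derivative ((real (k+2)) * u ^ (k + 1) / (real (k + 2)) - a * ((real (k+1)) * u ^ k) / (real (k + 1)))) (at u)"
      unfolding G_def by (rule derivative_eq_intros refl | simp)+
    moreover have "((real (k+2)) * u ^ (k + 1) / (real (k + 2)) - a * ((real (k+1)) * u ^ k) / (real (k + 1))) = (u - a) * u ^ k"
    proof -
      have h1: "real (k + 1) \<noteq> 0" "real (k+2) \<noteq> 0" by auto
      have e1: "(real (k+2)) * u ^ (k + 1) / (real (k + 2)) = u * u ^ k"
        using h1(2) by (simp add: field_split_simps)
      have e2: "a * ((real (k+1)) * u ^ k) / (real (k + 1)) = a * u ^ k"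
        using h1(1) by (simp add: field_split_simps)
      show ?thesis unfolding e1 e2 by (simp add: algebra_simps)
    qed
    ultimately show ?thesis by simp
  qed
  have "(LBINT u=a..(1::real). (u - a) * u ^ k) = G 1 - G a"
    using assms
    by (intro interval_integral_FTC_finite continuous_intros)
       (auto simp: has_real_derivative_iff_has_vector_derivative[symmetric] intro: DERIV_subset[OF d])
  moreover have "G 1 - G a = (1 - a ^ (k + 2)) / (k + 2) - a * (1 - a ^ (k + 1)) / (k + 1)"
    unfolding G_def using fB[of k a] by simp
  ultimately show ?thesis using assms by (simp add: interval_integral_Icc)
qed


lemma unif_int:
  fixes f :: "real \<Rightarrow> real" assumes f[measurable]: "f \<in> borel_measurable borel"
  shows "(\<integral>u. f u \<partial>unif01) = (\<integral>u. indicator {0..1} u * f u \<partial>lborel)"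
proof -
  have "unif01 = density lborel (\<lambda>x. ennreal (indicator {0..1::real} x))"
    unfolding uniform_measure_def by (simp add: ennreal_indicator divide_ennreal_def)
  then show ?thesis
    by (simp add: integral_density)
qed

lemma hval_nn:
  fixes a :: real and w :: "real \<Rightarrow> real"
  assumes a: "0 \<le> a" "a \<le> 1" and w: "continuous_on UNIV w" "\<And>u. 0 \<le> w u"
  shows "(\<integral>\<^sup>+ u. indicator {0..1} u * ennreal (u - a) * ennreal (w u) \<partial>lborel) =
         ennreal (\<integral>u\<in>{a..1}. (u - a) * w u \<partial>lborel)"
proof -
  have "(\<integral>\<^sup>+ u. indicator {0..1} u * ennreal (u - a) * ennreal (w u) \<partial>lborel) =
        (\<integral>\<^sup>+ u. ennreal (indicator {a..1} u *\<^sub>R ((u - a) * w u)) \<partial>lborel)"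
  proof (rule nn_integral_cong)
    fix u :: real
    show "indicator {0..1} u * ennreal (u - a) * ennreal (w u) = ennreal (indicator {a..1} u *\<^sub>R ((u - a) * w u))"
      using a w(2)[of u] by (cases "a \<le> u"; cases "u \<le> 1") (auto simp: indicator_def ennreal_neg ennreal_mult)
  qed
  also have "\<dots> = ennreal (\<integral>u. indicator {a..1} u *\<^sub>R ((u - a) * w u) \<partial>lborel)"
  proof (rule nn_integral_eq_integral)
    show "integrable lborel (\<lambda>u. indicator {a..1} u *\<^sub>R ((u - a) * w u))"
      by (rule borel_integrable_compact) (auto intro!: continuous_intros continuous_on_subset[OF w(1)])
    show "AE u in lborel. 0 \<le> indicator {a..1} u *\<^sub>R ((u - a) * w u)"
      using w(2) by (auto simp: indicator_def)
  qed
  finally show ?thesis by (simp add: set_lebesgue_integral_def)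
qed

lemma alg1: fixes A B mu e :: real
  assumes "0 < A" "0 < B" "0 < mu"
  shows "(mu - e) / (B * mu) = (1 / B) * (B * A * (1 / (A * B) - 1 / (A * B) * e / mu))"
  using assms by (simp add: field_simps)

lemma alg2: fixes A B mu e h :: real
  assumes "0 < A" "0 < B" "0 < mu" "A * h + e / B = mu" "B = A + 1"
  shows "(e - mu) / (B * mu) = (1 - 1 / B) * (B * (1 / B - h / mu))"
proof -
  have B0: "B \<noteq> 0" "mu \<noteq> 0" using assms by auto
  have e: "e = B * mu - A * B * h" using assms(2,4) by (simp add: field_simps)
  have l: "(e - mu) / (B * mu) = (B * mu - A * B * h - mu) / (B * mu)" unfolding e ..
  have r: "(1 - 1 / B) * (B * (1 / B - h / mu)) = (B - 1) * (mu - B * h) / (B * mu)"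
    using B0 by (simp add: field_simps)
  have m: "B * mu - A * B * h - mu = (B - 1) * (mu - B * h)" using assms(5) by (simp add: algebra_simps)
  show ?thesis unfolding l r m ..
qed

lemma alg3: fixes a :: real and k :: nat
  shows "real (k + 1) * ((1 - a ^ (k + 2)) / (k + 2) - a * (1 - a ^ (k + 1)) / (k + 1)) + (1 - a ^ (k + 2)) / (k + 2) = 1 - a"
proof -
  have h: "real (k + 1) \<noteq> 0" "real (k + 2) \<noteq> 0" by auto
  have g: "c * (P - Y) + P = (c + 1) * P - c * Y" for c P Y :: real by algebra
  have s1: "real (k + 1) * (a * (1 - a ^ (k + 1)) / real (k + 1)) = a * (1 - a ^ (k + 1))"
    using h(1) by simp
  have s2: "(real (k + 1) + 1) * ((1 - a ^ (k + 2)) / real (k + 2)) = 1 - a ^ (k + 2)"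
    using h(2) by simp
  have "real (k + 1) * ((1 - a ^ (k + 2)) / real (k + 2) - a * (1 - a ^ (k + 1)) / real (k + 1)) + (1 - a ^ (k + 2)) / real (k + 2)
      = 1 - a ^ (k + 2) - a * (1 - a ^ (k + 1))"
    unfolding g s1 s2 ..
  also have "\<dots> = 1 - a"
    using pA[of a k] by (simp add: algebra_simps)
  finally show ?thesis by simp
qed




lemma layer_cake:
  fixes g :: "'b \<Rightarrow> real"
  assumes K: "sigma_finite_measure K" and g[measurable]: "g \<in> borel_measurable K"
  shows "(\<integral>\<^sup>+ x. ennreal (g x) \<partial>K) =
         (\<integral>\<^sup>+ t. indicator {0..} t * emeasure K {x\<in>space K. t < g x} \<partial>lborel)"
proof -
  interpret pair_sigma_finite K lborel
    using K by (simp add: pair_sigma_finite_def lborel.sigma_finite_measure_axioms)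
  have 1: "ennreal (g x) = (\<integral>\<^sup>+ t. indicator {0..<g x} t \<partial>lborel)" for x
    by (cases "0 \<le> g x") (auto simp: ennreal_neg)
  have "(\<integral>\<^sup>+ x. ennreal (g x) \<partial>K) = (\<integral>\<^sup>+ x. (\<integral>\<^sup>+ t. indicator {0..<g x} t \<partial>lborel) \<partial>K)"
    using 1 by simp
  also have "\<dots> = (\<integral>\<^sup>+ t. (\<integral>\<^sup>+ x. indicator {0..<g x} t \<partial>K) \<partial>lborel)"
  proof (rule Fubini'[symmetric])
    have "case_prod (\<lambda>x t. indicator {0..<g x} t :: ennreal) = (\<lambda>p. of_bool (0 \<le> snd p \<and> snd p < g (fst p)))"
      by (auto simp: fun_eq_iff indicator_def)
    then show "case_prod (\<lambda>x t. indicator {0..<g x} t :: ennreal) \<in> borel_measurable (K \<Otimes>\<^sub>M lborel)"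
      by simp
  qed
  also have "\<dots> = (\<integral>\<^sup>+ t. indicator {0..} t * emeasure K {x\<in>space K. t < g x} \<partial>lborel)"
  proof (rule nn_integral_cong)
    fix t :: real
    have "(\<integral>\<^sup>+ x. indicator {0..<g x} t \<partial>K) = (\<integral>\<^sup>+ x. indicator {0..} t * indicator {x\<in>space K. t < g x} x \<partial>K)"
      by (rule nn_integral_cong) (auto simp: indicator_def)
    also have "\<dots> = indicator {0..} t * emeasure K {x\<in>space K. t < g x}"
      by (rule nn_integral_cmult_indicator) measurable
    finally show "(\<integral>\<^sup>+ x. indicator {0..<g x} t \<partial>K) = indicator {0..} t * emeasure K {x\<in>space K. t < g x}" .
  qed
  finally show ?thesis .
qed

locale gsetup = prob_space M for M :: "'a measure" +
  fixes X :: "'a \<Rightarrow> real"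
  assumes Xm[measurable]: "X \<in> borel_measurable M"
  and Xnn: "AE \<omega> in M. 0 \<le> X \<omega>" and Xint: "integrable M X"
begin

abbreviation "F \<equiv> cdf_of M X"
abbreviation "N \<equiv> distr M borel X"
abbreviation "Q \<equiv> quantile_fn F"

lemma N_rd: "real_distribution N" by simp

lemma F_cdf: "F x = cdf N x"
  unfolding cdf_of_def cdf_def by (simp add: measure_distr vimage_def Int_def conj_commute)

lemma F_mono: "x \<le> y \<Longrightarrow> F x \<le> F y"
  unfolding F_cdf using finite_borel_measure.cdf_nondecreasing[OF real_distribution.finite_borel_measure_M[OF N_rd]] .

lemma F_le1: "F x \<le> 1"
  unfolding F_cdf using real_distribution.cdf_bounded_prob[OF N_rd] .

lemma F_ge0: "0 \<le> F x"
  unfolding cdf_of_def by simp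

lemma F_rc: "continuous (at_right a) F"
  unfolding F_cdf[abs_def] using finite_borel_measure.cdf_is_right_cont[OF real_distribution.finite_borel_measure_M[OF N_rd]] .

lemma F_top: "(F \<longlongrightarrow> 1) at_top"
  unfolding F_cdf[abs_def] using real_distribution.cdf_lim_at_top_prob[OF N_rd] .

lemma F_neg: assumes "x < 0" shows "F x = 0"
proof -
  have "AE \<omega> in M. \<not> X \<omega> \<le> x" using Xnn by eventually_elim (use assms in auto)
  then have "emeasure M {\<omega> \<in> space M. X \<omega> \<le> x} = 0"
    by (subst (asm) AE_iff_measurable[OF _ refl]) auto
  then show ?thesis unfolding cdf_of_def by (simp add: measure_def)
qed

lemma F_meas[measurable]: "F \<in> borel_measurable borel"
  by (rule borel_measurable_mono) (auto simp: mono_def F_mono)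

lemma galois:
  assumes s: "0 < s" "s < 1"
  shows "Q s \<le> x \<longleftrightarrow> s \<le> F x"
proof -
  let ?S = "{x. s \<le> F x}"
  have "\<forall>\<^sub>F x in at_top. s < F x"
    using F_top s(2) by (rule order_tendstoD)
  then obtain x0 where "s < F x0" by (auto simp: eventually_at_top_linorder)
  then have "x0 \<in> ?S" by simp
  then have ne: "?S \<noteq> {}" by auto
  have bdd: "bdd_below ?S"
  proof
    fix y assume "y \<in> ?S"
    then show "0 \<le> y" using F_neg[of y] s by (cases "y < 0") auto
  qed
  have key: "s \<le> F (Q s)"
  proof (rule tendsto_lowerbound)
    show "(F \<longlongrightarrow> F (Q s)) (at_right (Q s))" using F_rc[of "Q s"] by (simp add: continuous_within)
    show "\<forall>\<^sub>F x in at_right (Q s). s \<le> F x"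
      using eventually_at_right_less[of "Q s"]
    proof eventually_elim
      case (elim x)
      then obtain y where "y \<in> ?S" "y < x"
        using cInf_less_iff[OF ne bdd, of x] by (auto simp: quantile_fn_def)
      then show ?case using F_mono[of y x] by auto
    qed
  qed simp
  show ?thesis
  proof
    assume "Q s \<le> x" then show "s \<le> F x" using key F_mono[of "Q s" x] by auto
  next
    assume "s \<le> F x" then show "Q s \<le> x" unfolding quantile_fn_def by (intro cInf_lower bdd) auto
  qed
qed

lemma Q_nonneg: assumes "0 < s" "s < 1" shows "0 \<le> Q s"
proof (rule ccontr)
  assume "\<not> 0 \<le> Q s"
  moreover have "s \<le> F (Q s)" using galois[OF assms, of "Q s"] by simp
  ultimately show False using F_neg[of "Q s"] assms by simp
qed

lemma Q_set: assumes "0 < s" "s < 1" shows "{t. 0 \<le> t \<and> F t < s} = {0..<Q s}"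
proof (rule set_eqI)
  fix t
  have "F t < s \<longleftrightarrow> t < Q s" using galois[OF assms, of t] by linarith
  then show "t \<in> {t. 0 \<le> t \<and> F t < s} \<longleftrightarrow> t \<in> {0..<Q s}" by simp
qed

lemma Q_mono: "mono_on {0<..<1} Q"
proof (rule mono_onI)
  fix r s :: real assume "r \<in> {0<..<1}" "s \<in> {0<..<1}" "r \<le> s"
  then have "s \<le> F (Q s)" using galois[of s "Q s"] by simp
  then show "Q r \<le> Q s" using galois[of r "Q s"] \<open>r \<in> {0<..<1}\<close> \<open>r \<le> s\<close> by simp
qed


lemma Q_int: assumes "0 < s" "s < 1"
  shows "ennreal (Q s) = (\<integral>\<^sup>+ t. indicator {t. 0 \<le> t \<and> F t < s} t \<partial>lborel)"
  using Q_set[OF assms] Q_nonneg[OF assms] by simp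

definition Phi :: "real \<Rightarrow> ennreal" where
  "Phi u = (\<integral>\<^sup>+ t. indicator {0..} t * ennreal (u - F t) \<partial>lborel)"

lemma Phi_Q: assumes "u \<le> 1"
  shows "(\<integral>\<^sup>+ s. indicator {0<..<u} s * ennreal (Q s) \<partial>lborel) = Phi u"
proof -
  have "(\<integral>\<^sup>+ s. indicator {0<..<u} s * ennreal (Q s) \<partial>lborel) =
        (\<integral>\<^sup>+ s. (\<integral>\<^sup>+ t. of_bool (0 < s \<and> s < u \<and> 0 \<le> t \<and> F t < s) \<partial>lborel) \<partial>lborel)"
  proof (rule nn_integral_cong)
    fix s :: real
    show "indicator {0<..<u} s * ennreal (Q s) =
        (\<integral>\<^sup>+ t. of_bool (0 < s \<and> s < u \<and> 0 \<le> t \<and> F t < s) \<partial>lborel)"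
    proof (cases "0 < s \<and> s < u")
      case True
      then show ?thesis using Q_int[of s] assms by (simp add: indicator_def of_bool_def)
    next
      case False
      then show ?thesis by (auto simp: indicator_def)
    qed
  qed
  also have "\<dots> = (\<integral>\<^sup>+ t. (\<integral>\<^sup>+ s. of_bool (0 < s \<and> s < u \<and> 0 \<le> t \<and> F t < s) \<partial>lborel) \<partial>lborel)"
    by (rule lborel_pair.Fubini') measurable
  also have "\<dots> = Phi u"
    unfolding Phi_def
  proof (rule nn_integral_cong)
    fix t :: real
    have "(\<integral>\<^sup>+ s. of_bool (0 < s \<and> s < u \<and> 0 \<le> t \<and> F t < s) \<partial>lborel) =
          (\<integral>\<^sup>+ s. indicator {0..} t * indicator {F t<..<u} s \<partial>lborel)"
      using F_ge0[of t] by (intro nn_integral_cong) (auto simp: indicator_def)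
    also have "\<dots> = indicator {0..} t * ennreal (u - F t)"
    proof -
      have "emeasure lborel {F t<..<u} = ennreal (u - F t)"
        by (cases "F t \<le> u") (simp_all add: ennreal_neg)
      then show ?thesis by (subst nn_integral_cmult_indicator) auto
    qed
    finally show "(\<integral>\<^sup>+ s. of_bool (0 < s \<and> s < u \<and> 0 \<le> t \<and> F t < s) \<partial>lborel) =
          indicator {0..} t * ennreal (u - F t)" .
  qed
  finally show ?thesis .
qed

lemma mean_Phi: "Phi 1 = ennreal (mean_of M X)"
proof -
  have "Phi 1 = (\<integral>\<^sup>+ t. indicator {0..} t * emeasure M {\<omega>\<in>space M. t < X \<omega>} \<partial>lborel)"
    unfolding Phi_def
  proof (intro nn_integral_cong)
    fix t
    have "{\<omega>\<in>space M. t < X \<omega>} = space M - {\<omega>\<in>space M. X \<omega> \<le> t}" by auto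
    then have "emeasure M {\<omega>\<in>space M. t < X \<omega>} = ennreal (1 - F t)"
      unfolding cdf_of_def by (simp add: emeasure_eq_measure prob_compl)
    then show "indicator {0..} t * ennreal (1 - F t) = indicator {0..} t * emeasure M {\<omega>\<in>space M. t < X \<omega>}"
      by simp
  qed
  also have "\<dots> = (\<integral>\<^sup>+ \<omega>. ennreal (X \<omega>) \<partial>M)"
    by (rule layer_cake[symmetric]) (auto intro: sigma_finite_measure)
  also have "\<dots> = ennreal (mean_of M X)"
    unfolding mean_of_def by (rule nn_integral_eq_integral[OF Xint Xnn])
  finally show ?thesis .
qed

lemma Phi_mono: "u \<le> v \<Longrightarrow> Phi u \<le> Phi v"
  unfolding Phi_def by (intro nn_integral_mono mult_left_mono ennreal_leI) auto

lemma Phi_fin: "u \<le> 1 \<Longrightarrow> Phi u < \<infinity>"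
  using Phi_mono[of u 1] mean_Phi by (simp add: order_le_less_trans)

lemma Qind_meas: "(\<lambda>t. indicator {0<..<1} t * Q t) \<in> borel_measurable borel"
  using borel_measurable_mono_on_fnc[OF Q_mono] borel_measurable_restrict_space_iff[of "{0<..<1}" borel Q]
  by simp

lemma lorenz_Phi: assumes "0 \<le> p" "p \<le> 1"
  shows "(\<integral>t\<in>{0..p}. Q t \<partial>lborel) = enn2real (Phi p)"
proof -
  let ?g = "\<lambda>t. indicator {0..p} t *\<^sub>R Q t"
  have meas: "?g \<in> borel_measurable lborel"
  proof (rule measurable_discrete_difference[where X="{0, p}"])
    show "(\<lambda>t. indicator {0<..<p} t * (indicator {0<..<1} t * Q t)) \<in> borel_measurable lborel"
      using Qind_meas by simp
    show "indicator {0<..<p} t * (indicator {0<..<1} t * Q t) = ?g t" if "t \<notin> {0, p}" for t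
      using that assms by (auto simp: indicator_def)
  qed auto
  have ae: "AE t in lborel. t \<noteq> 0 \<and> t \<noteq> p"
    using AE_lborel_singleton[of 0] AE_lborel_singleton[of p] by eventually_elim auto
  have hb: "has_bochner_integral lborel ?g (enn2real (Phi p))"
  proof (rule has_bochner_integral_nn_integral[OF meas])
    show "AE t in lborel. 0 \<le> ?g t"
      using ae by eventually_elim (use assms Q_nonneg in \<open>auto simp: indicator_def\<close>)
    show "0 \<le> enn2real (Phi p)" by simp
    have "(\<integral>\<^sup>+ t. ennreal (?g t) \<partial>lborel) = (\<integral>\<^sup>+ t. indicator {0<..<p} t * ennreal (Q t) \<partial>lborel)"
      by (rule nn_integral_cong_AE, use ae in eventually_elim) (auto simp: indicator_def)
    also have "\<dots> = Phi p" using Phi_Q assms by simp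
    also have "\<dots> = ennreal (enn2real (Phi p))" using Phi_fin[OF assms(2)] by simp
    finally show "(\<integral>\<^sup>+ t. ennreal (?g t) \<partial>lborel) = ennreal (enn2real (Phi p))" .
  qed
  then show ?thesis unfolding set_lebesgue_integral_def by (rule has_bochner_integral_integral_eq)
qed


lemma N_prob: "prob_space N" by (rule prob_space_distr) simp

lemma N_gt: "emeasure N {t<..} = ennreal (1 - F t)"
proof -
  have "{\<omega>\<in>space M. t < X \<omega>} = space M - {\<omega>\<in>space M. X \<omega> \<le> t}" by auto
  then have "emeasure M {\<omega>\<in>space M. t < X \<omega>} = ennreal (1 - F t)"
    unfolding cdf_of_def by (simp add: emeasure_eq_measure prob_compl)
  then show ?thesis by (simp add: emeasure_distr vimage_def Int_def conj_commute)
qed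

lemma N_le: "emeasure N {..t} = ennreal (F t)"
  unfolding cdf_of_def by (simp add: emeasure_distr vimage_def Int_def conj_commute emeasure_eq_measure)

lemma N_nonneg: "AE x in N. 0 \<le> x"
  by (subst AE_distr_iff) (auto simp: Xnn)

lemma PP: "product_prob_space (\<lambda>_. N)"
proof -
  have "prob_space N" by (rule N_prob)
  then show ?thesis
    by (simp add: product_prob_space_def product_prob_space_axioms_def product_sigma_finite_def prob_space_imp_sigma_finite)
qed

lemma P_box: assumes "\<And>i. i < m \<Longrightarrow> A i \<in> sets borel"
  shows "emeasure (iid_copies M X m) (Pi\<^sub>E {..<m} A) = (\<Prod>i<m. emeasure N (A i))"
  unfolding iid_copies_def
  using product_sigma_finite.emeasure_PiM[OF product_prob_space.axioms(1)[OF PP], of "{..<m}" A] assms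
  by simp

lemma P_space: "space (iid_copies M X m) = Pi\<^sub>E {..<m} (\<lambda>_. UNIV)"
  unfolding iid_copies_def by (simp add: space_PiM)

lemma P_prob: "prob_space (iid_copies M X m)"
  unfolding iid_copies_def by (rule prob_space_PiM) (rule N_prob)

lemma P_nonneg: "AE x in iid_copies M X m. \<forall>i\<in>{..<m}. 0 \<le> x i"
proof (rule AE_finite_allI)
  fix i assume i: "i \<in> {..<m}"
  show "AE x in iid_copies M X m. 0 \<le> x i"
    unfolding iid_copies_def by (rule product_prob_space.AE_component[OF PP i N_nonneg])
qed simp

lemma P_comp_meas[measurable]: "i < m \<Longrightarrow> (\<lambda>x. x i) \<in> borel_measurable (iid_copies M X m)"
proof -
  assume "i < m"
  then have "(\<lambda>x. x i) \<in> measurable (iid_copies M X m) N"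
    unfolding iid_copies_def by (intro measurable_component_singleton) simp
  then show ?thesis by (simp cong: measurable_cong_sets)
qed


lemma P_sf: "sigma_finite_measure (iid_copies M X m)"
  using P_prob prob_space_imp_sigma_finite by blast

lemma E_x0: assumes "0 < m"
  shows "(\<integral>\<^sup>+ x. ennreal (x 0) \<partial>iid_copies M X m) = Phi 1"
proof -
  have "(\<integral>\<^sup>+ x. ennreal (x 0) \<partial>iid_copies M X m) =
     (\<integral>\<^sup>+ t. indicator {0..} t * emeasure (iid_copies M X m) {x\<in>space (iid_copies M X m). t < x 0} \<partial>lborel)"
    by (rule layer_cake[OF P_sf]) (intro P_comp_meas assms)
  also have "\<dots> = Phi 1" unfolding Phi_def
  proof (rule nn_integral_cong)
    fix t
    have "{x\<in>space (iid_copies M X m). t < x 0} = Pi\<^sub>E {..<m} (\<lambda>i. if i = 0 then {t<..} else UNIV)"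
    proof (rule set_eqI)
      fix x
      show "x \<in> {x\<in>space (iid_copies M X m). t < x 0} \<longleftrightarrow> x \<in> Pi\<^sub>E {..<m} (\<lambda>i. if i = 0 then {t<..} else UNIV)"
        unfolding P_space PiE_iff using assms by auto
    qed
    moreover have "emeasure (iid_copies M X m) (Pi\<^sub>E {..<m} (\<lambda>i. if i = 0 then {t<..} else UNIV)) =
      (\<Prod>i<m. emeasure N (if i = 0 then {t<..} else UNIV))"
      by (rule P_box) auto
    moreover have "(\<Prod>i<m. emeasure N (if i = 0 then {t<..} else UNIV)) = (\<Prod>i<m. if i = 0 then ennreal (1 - F t) else 1)"
    proof (rule prod.cong)
      fix i
      have "emeasure N UNIV = 1" using prob_space.emeasure_space_1[OF N_prob] by simp
      then show "emeasure N (if i = 0 then {t<..} else UNIV) = (if i = 0 then ennreal (1 - F t) else 1)"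
        by (simp add: N_gt)
    qed simp
    moreover have "(\<Prod>i<m. if i = 0 then ennreal (1 - F t) else 1) = ennreal (1 - F t)"
      using assms by (subst prod.delta) auto
    ultimately show "indicator {0..} t * emeasure (iid_copies M X m) {x\<in>space (iid_copies M X m). t < x 0} =
       indicator {0..} t * ennreal (1 - F t)" by simp
  qed
  finally show ?thesis .
qed

lemma E_min: assumes "0 < m"
  shows "(\<integral>\<^sup>+ x. ennreal (Min (x ` {..<m})) \<partial>iid_copies M X m) =
     (\<integral>\<^sup>+ t. indicator {0..} t * ennreal ((1 - F t) ^ m) \<partial>lborel)"
proof -
  have "(\<integral>\<^sup>+ x. ennreal (Min (x ` {..<m})) \<partial>iid_copies M X m) =
     (\<integral>\<^sup>+ t. indicator {0..} t * emeasure (iid_copies M X m) {x\<in>space (iid_copies M X m). t < Min (x ` {..<m})} \<partial>lborel)"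
    by (rule layer_cake[OF P_sf]) (rule borel_measurable_Min borel_measurable_Max; auto intro: P_comp_meas)
  also have "\<dots> = (\<integral>\<^sup>+ t. indicator {0..} t * ennreal ((1 - F t) ^ m) \<partial>lborel)"
  proof (rule nn_integral_cong)
    fix t
    have "{x\<in>space (iid_copies M X m). t < Min (x ` {..<m})} = Pi\<^sub>E {..<m} (\<lambda>i. {t<..})"
    proof (rule set_eqI)
      fix x
      have "t < Min (x ` {..<m}) \<longleftrightarrow> (\<forall>i<m. t < x i)" using assms by (subst Min_gr_iff) auto
      then show "x \<in> {x\<in>space (iid_copies M X m). t < Min (x ` {..<m})} \<longleftrightarrow> x \<in> Pi\<^sub>E {..<m} (\<lambda>i. {t<..})"
        unfolding P_space PiE_iff by auto
    qed
    moreover have "emeasure (iid_copies M X m) (Pi\<^sub>E {..<m} (\<lambda>i. {t<..})) = (\<Prod>i<m. emeasure N {t<..})"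
      by (rule P_box) auto
    moreover have "(\<Prod>i<m. emeasure N {t<..}) = ennreal ((1 - F t) ^ m)"
      using F_le1[of t] by (simp add: N_gt ennreal_power)
    ultimately show "indicator {0..} t * emeasure (iid_copies M X m) {x\<in>space (iid_copies M X m). t < Min (x ` {..<m})} =
       indicator {0..} t * ennreal ((1 - F t) ^ m)" by simp
  qed
  finally show ?thesis .
qed

lemma E_max: assumes "0 < m"
  shows "(\<integral>\<^sup>+ x. ennreal (Max (x ` {..<m})) \<partial>iid_copies M X m) =
     (\<integral>\<^sup>+ t. indicator {0..} t * ennreal (1 - F t ^ m) \<partial>lborel)"
proof -
  have "(\<integral>\<^sup>+ x. ennreal (Max (x ` {..<m})) \<partial>iid_copies M X m) =
     (\<integral>\<^sup>+ t. indicator {0..} t * emeasure (iid_copies M X m) {x\<in>space (iid_copies M X m). t < Max (x ` {..<m})} \<partial>lborel)"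
    by (rule layer_cake[OF P_sf]) (rule borel_measurable_Min borel_measurable_Max; auto intro: P_comp_meas)
  also have "\<dots> = (\<integral>\<^sup>+ t. indicator {0..} t * ennreal (1 - F t ^ m) \<partial>lborel)"
  proof (rule nn_integral_cong)
    fix t
    let ?A = "Pi\<^sub>E {..<m} (\<lambda>i. {..t}) :: (nat \<Rightarrow> real) set"
    have A: "?A \<in> sets (iid_copies M X m)"
      unfolding iid_copies_def by (rule sets_PiM_I_finite) auto
    have "{x\<in>space (iid_copies M X m). t < Max (x ` {..<m})} = space (iid_copies M X m) - ?A"
    proof (rule set_eqI)
      fix x
      have h0: "t < Max (x ` {..<m}) \<longleftrightarrow> (\<exists>i<m. t < x i)" using assms by (subst Max_gr_iff) auto
      have h1: "x \<in> ?A \<longleftrightarrow> x \<in> space (iid_copies M X m) \<and> (\<forall>i<m. x i \<le> t)"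
        unfolding P_space PiE_iff by auto
      have h2: "(\<exists>i<m. t < x i) \<longleftrightarrow> \<not> (\<forall>i<m. x i \<le> t)" by (auto simp: not_le)
      show "x \<in> {x\<in>space (iid_copies M X m). t < Max (x ` {..<m})} \<longleftrightarrow> x \<in> space (iid_copies M X m) - ?A"
        using h0 h1 h2 by blast
    qed
    moreover have "emeasure (iid_copies M X m) ?A = (\<Prod>i<m. emeasure N {..t})"
      by (rule P_box) auto
    moreover have "(\<Prod>i<m. emeasure N {..t}) = ennreal (F t ^ m)"
      using F_ge0[of t] by (simp add: N_le ennreal_power)
    ultimately have e1: "emeasure (iid_copies M X m) {x\<in>space (iid_copies M X m). t < Max (x ` {..<m})} =
        emeasure (iid_copies M X m) (space (iid_copies M X m) - ?A)" and e2: "emeasure (iid_copies M X m) ?A = ennreal (F t ^ m)"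
      by simp_all
    have e3: "emeasure (iid_copies M X m) (space (iid_copies M X m) - ?A) =
        emeasure (iid_copies M X m) (space (iid_copies M X m)) - emeasure (iid_copies M X m) ?A"
      using A e2 by (intro emeasure_compl) auto
    have e4: "emeasure (iid_copies M X m) (space (iid_copies M X m)) = 1"
      by (rule prob_space.emeasure_space_1[OF P_prob])
    have e5: "1 - ennreal (F t ^ m) = ennreal (1 - F t ^ m)"
      using ennreal_minus[of "F t ^ m" 1] F_ge0[of t] by simp
    show "indicator {0..} t * emeasure (iid_copies M X m) {x\<in>space (iid_copies M X m). t < Max (x ` {..<m})} =
       indicator {0..} t * ennreal (1 - F t ^ m)"
      unfolding e1 e3 e4 e2 e5 ..
  qed
  finally show ?thesis .
qed


lemma Q_meas[measurable]: "Q \<in> borel_measurable borel"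
proof (rule measurable_discrete_difference[where X="{0, 1}"])
  show "(\<lambda>s. indicator {0<..<1} s * Q s + indicator {1<..} s * Q 2 + indicator {..<0} s * Q (-1)) \<in> borel_measurable borel"
    using Qind_meas by measurable
  fix s :: real assume s: "s \<notin> {0, 1}"
  have big: "Q s = Q 2" if "1 < s"
  proof -
    have "\<not> s \<le> F x" "\<not> 2 \<le> F x" for x using F_le1[of x] that by linarith+
    then have "{x. s \<le> F x} = {}" "{x. 2 \<le> F x} = {}" by blast+
    then show ?thesis unfolding quantile_fn_def by (simp only:)
  qed
  have small: "Q s = Q (-1)" if "s < 0"
  proof -
    have "s \<le> F x" "-1 \<le> F x" for x using F_ge0[of x] that by linarith+
    then have "{x. s \<le> F x} = UNIV" "{x. -1 \<le> F x} = UNIV" by blast+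
    then show ?thesis unfolding quantile_fn_def by (simp only:)
  qed
  show "indicator {0<..<1} s * Q s + indicator {1<..} s * Q 2 + indicator {..<0} s * Q (-1) = Q s"
    using s big small by (cases "s < 0"; cases "1 < s") (auto simp: indicator_def)
qed auto

lemma lorenz_meas[measurable]: "(\<lambda>u. lorenz M X u) \<in> borel_measurable borel"
proof -
  have "(\<lambda>u. \<integral>t. indicator {0..u} t *\<^sub>R Q t \<partial>lborel) \<in> borel_measurable lborel"
  proof (rule lborel.borel_measurable_lebesgue_integral)
    have "case_prod (\<lambda>u t. indicator {0..u} t *\<^sub>R Q t) = (\<lambda>p. (if 0 \<le> snd p \<and> snd p \<le> fst p then 1 else 0) * Q (snd p))"
      by (auto simp: fun_eq_iff indicator_def)
    then show "case_prod (\<lambda>u t. indicator {0..u} t *\<^sub>R Q t) \<in> borel_measurable (lborel \<Otimes>\<^sub>M lborel)"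
      by simp
  qed
  then show ?thesis unfolding lorenz_def set_lebesgue_integral_def by simp
qed

lemma Phi_meas[measurable]: "Phi \<in> borel_measurable borel"
proof -
  have "(\<lambda>u. \<integral>\<^sup>+ t. indicator {0..} t * ennreal (u - F t) \<partial>lborel) \<in> borel_measurable lborel"
  proof (rule lborel.borel_measurable_nn_integral)
    have "case_prod (\<lambda>u t. indicator {0..} t * ennreal (u - F t)) = (\<lambda>p. (if 0 \<le> snd p then 1 else 0) * ennreal (fst p - F (snd p)))"
      by (auto simp: fun_eq_iff indicator_def)
    then show "case_prod (\<lambda>u t. indicator {0..} t * ennreal (u - F t)) \<in> borel_measurable (lborel \<Otimes>\<^sub>M lborel)"
      by simp
  qed
  then show ?thesis unfolding Phi_def[abs_def] by simp
qed


lemma H_eq: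
  fixes w :: "real \<Rightarrow> real"
  assumes w: "continuous_on UNIV w" "\<And>u. 0 \<le> w u"
  shows "(\<integral>\<^sup>+ u. indicator {0..1} u * Phi u * ennreal (w u) \<partial>lborel) =
    (\<integral>\<^sup>+ t. indicator {0..} t * ennreal (\<integral>u\<in>{F t..1}. (u - F t) * w u \<partial>lborel) \<partial>lborel)"
proof -
  have wm[measurable]: "w \<in> borel_measurable borel" using w(1) by (rule borel_measurable_continuous_onI)
  have "(\<integral>\<^sup>+ u. indicator {0..1} u * Phi u * ennreal (w u) \<partial>lborel) =
    (\<integral>\<^sup>+ u. (\<integral>\<^sup>+ t. (indicator {0..1} u * ennreal (w u)) * (indicator {0..} t * ennreal (u - F t)) \<partial>lborel) \<partial>lborel)"
  proof (rule nn_integral_cong)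
    fix u :: real
    have "(\<integral>\<^sup>+ t. (indicator {0..1} u * ennreal (w u)) * (indicator {0..} t * ennreal (u - F t)) \<partial>lborel) =
        (indicator {0..1} u * ennreal (w u)) * Phi u"
      unfolding Phi_def by (rule nn_integral_cmult) simp
    then show "indicator {0..1} u * Phi u * ennreal (w u) =
      (\<integral>\<^sup>+ t. (indicator {0..1} u * ennreal (w u)) * (indicator {0..} t * ennreal (u - F t)) \<partial>lborel)"
      by (simp add: ac_simps)
  qed
  also have "\<dots> = (\<integral>\<^sup>+ t. (\<integral>\<^sup>+ u. (indicator {0..1} u * ennreal (w u)) * (indicator {0..} t * ennreal (u - F t)) \<partial>lborel) \<partial>lborel)"
  proof (rule lborel_pair.Fubini'[symmetric])
    have "case_prod (\<lambda>u t. (indicator {0..1} u * ennreal (w u)) * (indicator {0..} t * ennreal (u - F t))) =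
      (\<lambda>p. ((if 0 \<le> fst p \<and> fst p \<le> 1 then 1 else 0) * ennreal (w (fst p))) * ((if 0 \<le> snd p then 1 else 0) * ennreal (fst p - F (snd p))))"
      by (auto simp: fun_eq_iff indicator_def)
    then show "case_prod (\<lambda>u t. (indicator {0..1} u * ennreal (w u)) * (indicator {0..} t * ennreal (u - F t))) \<in> borel_measurable (lborel \<Otimes>\<^sub>M lborel)"
      by simp
  qed
  also have "\<dots> = (\<integral>\<^sup>+ t. indicator {0..} t * ennreal (\<integral>u\<in>{F t..1}. (u - F t) * w u \<partial>lborel) \<partial>lborel)"
  proof (rule nn_integral_cong)
    fix t :: real
    have "(\<integral>\<^sup>+ u. (indicator {0..1} u * ennreal (w u)) * (indicator {0..} t * ennreal (u - F t)) \<partial>lborel) =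
       (\<integral>\<^sup>+ u. indicator {0..} t * (indicator {0..1} u * ennreal (u - F t) * ennreal (w u)) \<partial>lborel)"
      by (simp add: ac_simps)
    also have "\<dots> = indicator {0..} t * (\<integral>\<^sup>+ u. indicator {0..1} u * ennreal (u - F t) * ennreal (w u) \<partial>lborel)"
      by (rule nn_integral_cmult) simp
    also have "\<dots> = indicator {0..} t * ennreal (\<integral>u\<in>{F t..1}. (u - F t) * w u \<partial>lborel)"
      using hval_nn[OF F_ge0 F_le1 w] by simp
    finally show "(\<integral>\<^sup>+ u. (indicator {0..1} u * ennreal (w u)) * (indicator {0..} t * ennreal (u - F t)) \<partial>lborel) =
       indicator {0..} t * ennreal (\<integral>u\<in>{F t..1}. (u - F t) * w u \<partial>lborel)" .
  qed
  finally show ?thesis .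
qed


lemma H_fin:
  fixes w :: "real \<Rightarrow> real"
  assumes w: "continuous_on UNIV w" "\<And>u. 0 \<le> w u"
  shows "(\<integral>\<^sup>+ u. indicator {0..1} u * Phi u * ennreal (w u) \<partial>lborel) < \<infinity>"
proof -
  have wm[measurable]: "w \<in> borel_measurable borel" using w(1) by (rule borel_measurable_continuous_onI)
  have "(\<integral>\<^sup>+ u. indicator {0..1} u * Phi u * ennreal (w u) \<partial>lborel) \<le>
        (\<integral>\<^sup>+ u. Phi 1 * ennreal (indicator {0..1} u *\<^sub>R w u) \<partial>lborel)"
  proof (rule nn_integral_mono)
    fix u :: real
    show "indicator {0..1} u * Phi u * ennreal (w u) \<le> Phi 1 * ennreal (indicator {0..1} u *\<^sub>R w u)"
      using Phi_mono[of u 1] by (cases "u \<in> {0..1}") (auto intro: mult_right_mono)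
  qed
  also have "\<dots> = Phi 1 * (\<integral>\<^sup>+ u. ennreal (indicator {0..1} u *\<^sub>R w u) \<partial>lborel)"
    by (rule nn_integral_cmult) simp
  also have "(\<integral>\<^sup>+ u. ennreal (indicator {0..1} u *\<^sub>R w u) \<partial>lborel) = ennreal (\<integral>u. indicator {0..1} u *\<^sub>R w u \<partial>lborel)"
  proof (rule nn_integral_eq_integral)
    show "integrable lborel (\<lambda>u. indicator {0..1} u *\<^sub>R w u)"
      by (rule borel_integrable_compact) (auto intro: continuous_on_subset[OF w(1)])
  qed (simp add: w(2))
  finally show ?thesis using mean_Phi by (simp add: ennreal_mult_less_top order_le_less_trans ennreal_mult[symmetric])
qed

lemma I_decomp:
  fixes w :: "real \<Rightarrow> real"
  assumes w: "continuous_on UNIV w" "\<And>u. 0 \<le> w u"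
  shows "(\<integral>u. (u - lorenz M X u) * w u \<partial>unif01) =
     (\<integral>u\<in>{0..1}. (u - 0) * w u \<partial>lborel) -
     enn2real (\<integral>\<^sup>+ u. indicator {0..1} u * Phi u * ennreal (w u) \<partial>lborel) / mean_of M X"
proof -
  have wm[measurable]: "w \<in> borel_measurable borel" using w(1) by (rule borel_measurable_continuous_onI)
  let ?H = "(\<integral>\<^sup>+ u. indicator {0..1} u * Phi u * ennreal (w u) \<partial>lborel)"
  let ?f1 = "\<lambda>u. indicator {0..1} u *\<^sub>R ((u - 0) * w u)"
  let ?f2 = "\<lambda>u. indicator {0..1} u * (enn2real (Phi u) * w u)"
  have i1: "integrable lborel ?f1"
    by (rule borel_integrable_compact) (auto intro!: continuous_intros continuous_on_subset[OF w(1)])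
  have hb: "has_bochner_integral lborel ?f2 (enn2real ?H)"
  proof (rule has_bochner_integral_nn_integral)
    show "?f2 \<in> borel_measurable lborel" by simp
    show "AE x in lborel. 0 \<le> ?f2 x" using w(2) by (simp add: indicator_def)
    show "0 \<le> enn2real ?H" by simp
    have "(\<integral>\<^sup>+ u. ennreal (?f2 u) \<partial>lborel) = ?H"
    proof (rule nn_integral_cong)
      fix u :: real
      show "ennreal (?f2 u) = indicator {0..1} u * Phi u * ennreal (w u)"
        using Phi_fin[of u] w(2)[of u] by (cases "u \<in> {0..1}") (auto simp: ennreal_mult ennreal_enn2real_if)
    qed
    also have "\<dots> = ennreal (enn2real ?H)" using H_fin[OF w] by simp
    finally show "(\<integral>\<^sup>+ u. ennreal (?f2 u) \<partial>lborel) = ennreal (enn2real ?H)" .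
  qed
  have "(\<integral>u. (u - lorenz M X u) * w u \<partial>unif01) = (\<integral>u. indicator {0..1} u * ((u - lorenz M X u) * w u) \<partial>lborel)"
    by (rule unif_int) simp
  also have "\<dots> = (\<integral>u. ?f1 u - ?f2 u / mean_of M X \<partial>lborel)"
  proof (rule Bochner_Integration.integral_cong[OF refl])
    fix u :: real
    show "indicator {0..1} u * ((u - lorenz M X u) * w u) = ?f1 u - ?f2 u / mean_of M X"
    proof (cases "u \<in> {0..1}")
      case True
      then have "lorenz M X u = (1 / mean_of M X) * enn2real (Phi u)"
        unfolding lorenz_def using lorenz_Phi[of u] by simp
      then show ?thesis using True by (simp add: algebra_simps)
    qed simp
  qed
  also have "\<dots> = (\<integral>u. ?f1 u \<partial>lborel) - (\<integral>u. ?f2 u \<partial>lborel) / mean_of M X"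
    using i1 hb by (simp add: integrable.intros)
  also have "\<dots> = (\<integral>u\<in>{0..1}. (u - 0) * w u \<partial>lborel) - enn2real ?H / mean_of M X"
    using hb by (simp add: set_lebesgue_integral_def has_bochner_integral_integral_eq)
  finally show ?thesis .
qed


lemma mean_nonneg: "0 \<le> mean_of M X"
  unfolding mean_of_def using Xnn by (rule integral_nonneg_AE)

lemma Emin_fin: assumes "0 < m"
  shows "(\<integral>\<^sup>+ t. indicator {0..} t * ennreal ((1 - F t) ^ m) \<partial>lborel) < \<infinity>"
proof -
  have "(\<integral>\<^sup>+ t. indicator {0..} t * ennreal ((1 - F t) ^ m) \<partial>lborel) \<le> Phi 1"
    unfolding Phi_def
  proof (rule nn_integral_mono)
    fix t
    have "(1 - F t) ^ m \<le> (1 - F t) ^ 1"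
      using assms F_le1[of t] F_ge0[of t] by (intro power_decreasing) auto
    then show "indicator {0..} t * ennreal ((1 - F t) ^ m) \<le> indicator {0..} t * ennreal (1 - F t)"
      by (intro mult_left_mono ennreal_leI) auto
  qed
  then show ?thesis using Phi_fin[of 1] by (simp add: order_le_less_trans)
qed

lemma Emax_fin: assumes "0 < m"
  shows "(\<integral>\<^sup>+ t. indicator {0..} t * ennreal (1 - F t ^ m) \<partial>lborel) < \<infinity>"
proof -
  have "(\<integral>\<^sup>+ t. indicator {0..} t * ennreal (1 - F t ^ m) \<partial>lborel) \<le>
      (\<integral>\<^sup>+ t. ennreal (real m) * (indicator {0..} t * ennreal (1 - F t)) \<partial>lborel)"
  proof (rule nn_integral_mono)
    fix t
    have "1 + real m * (F t - 1) \<le> (1 + (F t - 1)) ^ m"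
      using F_ge0[of t] by (intro Bernoulli_inequality) auto
    then have "1 - F t ^ m \<le> real m * (1 - F t)" by (simp add: algebra_simps)
    then have "ennreal (1 - F t ^ m) \<le> ennreal (real m * (1 - F t))"
      by (rule ennreal_leI)
    moreover have "ennreal (real m * (1 - F t)) = ennreal (real m) * ennreal (1 - F t)"
      using F_le1[of t] by (intro ennreal_mult) auto
    ultimately have "ennreal (1 - F t ^ m) \<le> ennreal (real m) * ennreal (1 - F t)"
      by simp
    then show "indicator {0..} t * ennreal (1 - F t ^ m) \<le> ennreal (real m) * (indicator {0..} t * ennreal (1 - F t))"
      by (cases "0 \<le> t") auto
  qed
  also have "\<dots> = ennreal (real m) * Phi 1"
    unfolding Phi_def by (rule nn_integral_cmult) simp
  finally show ?thesis using Phi_fin[of 1] by (simp add: order_le_less_trans ennreal_mult_less_top)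
qed

lemma EminR: assumes "0 < m"
  shows "(\<integral>x. x 0 - Min (x ` {..<m}) \<partial>iid_copies M X m) =
    mean_of M X - enn2real (\<integral>\<^sup>+ t. indicator {0..} t * ennreal ((1 - F t) ^ m) \<partial>lborel)"
proof -
  let ?P = "iid_copies M X m"
  let ?E = "(\<integral>\<^sup>+ t. indicator {0..} t * ennreal ((1 - F t) ^ m) \<partial>lborel)"
  have nn: "AE x in ?P. \<forall>i\<in>{..<m}. 0 \<le> x i" by (rule P_nonneg)
  have h0: "has_bochner_integral ?P (\<lambda>x. x 0) (mean_of M X)"
  proof (rule has_bochner_integral_nn_integral)
    show "(\<lambda>x. x 0) \<in> borel_measurable ?P" using assms by (intro P_comp_meas)
    show "AE x in ?P. 0 \<le> x 0" using nn by eventually_elim (use assms in auto)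
    show "0 \<le> mean_of M X" by (rule mean_nonneg)
    show "(\<integral>\<^sup>+ x. ennreal (x 0) \<partial>?P) = ennreal (mean_of M X)"
      using E_x0[OF assms] mean_Phi by simp
  qed
  have h1: "has_bochner_integral ?P (\<lambda>x. Min (x ` {..<m})) (enn2real ?E)"
  proof (rule has_bochner_integral_nn_integral)
    show "(\<lambda>x. Min (x ` {..<m})) \<in> borel_measurable ?P"
      by (rule borel_measurable_Min; auto intro: P_comp_meas)
    show "AE x in ?P. 0 \<le> Min (x ` {..<m})"
      using nn by eventually_elim (use assms in \<open>subst Min_ge_iff; auto\<close>)
    show "0 \<le> enn2real ?E" by simp
    show "(\<integral>\<^sup>+ x. ennreal (Min (x ` {..<m})) \<partial>?P) = ennreal (enn2real ?E)"
      using E_min[OF assms] Emin_fin[OF assms] by simp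
  qed
  show ?thesis using has_bochner_integral_diff[OF h0 h1] by (rule has_bochner_integral_integral_eq)
qed

lemma EmaxR: assumes "0 < m"
  shows "(\<integral>x. Max (x ` {..<m}) - x 0 \<partial>iid_copies M X m) =
    enn2real (\<integral>\<^sup>+ t. indicator {0..} t * ennreal (1 - F t ^ m) \<partial>lborel) - mean_of M X"
proof -
  let ?P = "iid_copies M X m"
  let ?E = "(\<integral>\<^sup>+ t. indicator {0..} t * ennreal (1 - F t ^ m) \<partial>lborel)"
  have nn: "AE x in ?P. \<forall>i\<in>{..<m}. 0 \<le> x i" by (rule P_nonneg)
  have h0: "has_bochner_integral ?P (\<lambda>x. x 0) (mean_of M X)"
  proof (rule has_bochner_integral_nn_integral)
    show "(\<lambda>x. x 0) \<in> borel_measurable ?P" using assms by (intro P_comp_meas)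
    show "AE x in ?P. 0 \<le> x 0" using nn by eventually_elim (use assms in auto)
    show "0 \<le> mean_of M X" by (rule mean_nonneg)
    show "(\<integral>\<^sup>+ x. ennreal (x 0) \<partial>?P) = ennreal (mean_of M X)"
      using E_x0[OF assms] mean_Phi by simp
  qed
  have h1: "has_bochner_integral ?P (\<lambda>x. Max (x ` {..<m})) (enn2real ?E)"
  proof (rule has_bochner_integral_nn_integral)
    show "(\<lambda>x. Max (x ` {..<m})) \<in> borel_measurable ?P"
      by (rule borel_measurable_Max; auto intro: P_comp_meas)
    show "AE x in ?P. 0 \<le> Max (x ` {..<m})"
    proof (rule AE_mp[OF nn], intro AE_I2 impI)
      fix x :: "nat \<Rightarrow> real" assume "\<forall>i\<in>{..<m}. 0 \<le> x i"
      then have "0 \<le> x 0" using assms by auto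
      also have "x 0 \<le> Max (x ` {..<m})" using assms by (intro Max_ge) auto
      finally show "0 \<le> Max (x ` {..<m})" .
    qed
    show "0 \<le> enn2real ?E" by simp
    show "(\<integral>\<^sup>+ x. ennreal (Max (x ` {..<m})) \<partial>?P) = ennreal (enn2real ?E)"
      using E_max[OF assms] Emax_fin[OF assms] by simp
  qed
  show ?thesis using has_bochner_integral_diff[OF h1 h0] by (rule has_bochner_integral_integral_eq)
qed


lemma intA': assumes "a \<le> 1"
  shows "(\<integral>u\<in>{a..1}. (u - a) * \<bar>1 - u\<bar> ^ k \<partial>lborel) = (1 - a) ^ (k + 2) / (real (k + 1) * real (k + 2))"
proof -
  have "(\<integral>u\<in>{a..1}. (u - a) * \<bar>1 - u\<bar> ^ k \<partial>lborel) = (\<integral>u\<in>{a..1}. (u - a) * (1 - u) ^ k \<partial>lborel)"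
    by (rule set_lebesgue_integral_cong) auto
  then show ?thesis using intA[OF assms] by simp
qed

lemma intB': assumes "0 \<le> a" "a \<le> 1"
  shows "(\<integral>u\<in>{a..1}. (u - a) * \<bar>u\<bar> ^ k \<partial>lborel) = (1 - a ^ (k + 2)) / (k + 2) - a * (1 - a ^ (k + 1)) / (k + 1)"
proof -
  have "(\<integral>u\<in>{a..1}. (u - a) * \<bar>u\<bar> ^ k \<partial>lborel) = (\<integral>u\<in>{a..1}. (u - a) * u ^ k \<partial>lborel)"
    by (rule set_lebesgue_integral_cong) (use assms in auto)
  then show ?thesis using intB[OF assms(2)] by simp
qed

lemma unif_abs1: "(\<integral>u. (u - lorenz M X u) * (1 - u) ^ k \<partial>unif01) = (\<integral>u. (u - lorenz M X u) * \<bar>1 - u\<bar> ^ k \<partial>unif01)"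
proof -
  have "(\<integral>u. (u - lorenz M X u) * (1 - u) ^ k \<partial>unif01) = (\<integral>u. indicator {0..1} u * ((u - lorenz M X u) * (1 - u) ^ k) \<partial>lborel)"
    by (rule unif_int) simp
  also have "\<dots> = (\<integral>u. indicator {0..1} u * ((u - lorenz M X u) * \<bar>1 - u\<bar> ^ k) \<partial>lborel)"
    by (rule Bochner_Integration.integral_cong) (auto simp: indicator_def)
  also have "\<dots> = (\<integral>u. (u - lorenz M X u) * \<bar>1 - u\<bar> ^ k \<partial>unif01)"
    by (rule unif_int[symmetric]) simp
  finally show ?thesis .
qed

lemma unif_abs2: "(\<integral>u. (u - lorenz M X u) * u ^ k \<partial>unif01) = (\<integral>u. (u - lorenz M X u) * \<bar>u\<bar> ^ k \<partial>unif01)"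
proof -
  have "(\<integral>u. (u - lorenz M X u) * u ^ k \<partial>unif01) = (\<integral>u. indicator {0..1} u * ((u - lorenz M X u) * u ^ k) \<partial>lborel)"
    by (rule unif_int) simp
  also have "\<dots> = (\<integral>u. indicator {0..1} u * ((u - lorenz M X u) * \<bar>u\<bar> ^ k) \<partial>lborel)"
    by (rule Bochner_Integration.integral_cong) (auto simp: indicator_def)
  also have "\<dots> = (\<integral>u. (u - lorenz M X u) * \<bar>u\<bar> ^ k \<partial>unif01)"
    by (rule unif_int[symmetric]) simp
  finally show ?thesis .
qed

lemma main_min: assumes mu: "0 < mean_of M X"
  shows "IG_min M X (k + 2) = (1 / real (k + 2)) * G_index M X (k + 2)"
proof -
  define mu where "mu = mean_of M X"
  let ?w = "\<lambda>u::real. \<bar>1 - u\<bar> ^ k"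
  have wc: "continuous_on UNIV ?w" by (intro continuous_intros)
  have wn: "\<And>u. 0 \<le> ?w u" by simp
  let ?E = "(\<integral>\<^sup>+ t. indicator {0..} t * ennreal ((1 - F t) ^ (k + 2)) \<partial>lborel)"
  define emin where "emin = enn2real ?E"
  define c where "c = 1 / (real (k + 1) * real (k + 2))"
  have c_pos: "0 < c" unfolding c_def by simp
  have H: "(\<integral>\<^sup>+ u. indicator {0..1} u * Phi u * ennreal (?w u) \<partial>lborel) = ennreal c * ?E"
  proof -
    have "(\<integral>\<^sup>+ u. indicator {0..1} u * Phi u * ennreal (?w u) \<partial>lborel) =
      (\<integral>\<^sup>+ t. indicator {0..} t * ennreal (\<integral>u\<in>{F t..1}. (u - F t) * ?w u \<partial>lborel) \<partial>lborel)"
      by (rule H_eq[OF wc wn])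
    also have "\<dots> = (\<integral>\<^sup>+ t. ennreal c * (indicator {0..} t * ennreal ((1 - F t) ^ (k + 2))) \<partial>lborel)"
    proof (rule nn_integral_cong)
      fix t
      have "ennreal ((1 - F t) ^ (k + 2) / (real (k + 1) * real (k + 2))) = ennreal c * ennreal ((1 - F t) ^ (k + 2))"
        unfolding c_def using F_le1[of t] by (subst ennreal_mult[symmetric]) auto
      then show "indicator {0..} t * ennreal (\<integral>u\<in>{F t..1}. (u - F t) * ?w u \<partial>lborel) =
          ennreal c * (indicator {0..} t * ennreal ((1 - F t) ^ (k + 2)))"
        using intA'[OF F_le1[of t], of k] by (simp add: ac_simps)
    qed
    also have "\<dots> = ennreal c * ?E"
      by (rule nn_integral_cmult) simp
    finally show ?thesis .
  qed
  have Hr: "enn2real (\<integral>\<^sup>+ u. indicator {0..1} u * Phi u * ennreal (?w u) \<partial>lborel) = c * emin"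
    unfolding H emin_def using c_pos by (simp add: enn2real_mult)
  have c0: "(\<integral>u\<in>{0..1}. (u - 0) * ?w u \<partial>lborel) = c"
    using intA'[of 0 k] unfolding c_def by simp
  have Iw: "(\<integral>u. (u - lorenz M X u) * (1 - u) ^ k \<partial>unif01) = c - c * emin / mu"
    unfolding unif_abs1 I_decomp[OF wc wn] c0 Hr mu_def ..
  have e: "(\<integral>x. x 0 - Min (x ` {..<k + 2}) \<partial>iid_copies M X (k + 2)) = mu - emin"
    using EminR[of "k + 2"] unfolding emin_def mu_def by simp
  have L: "IG_min M X (k + 2) = (mu - emin) / (real (k + 2) * mu)"
    unfolding IG_min_def e mu_def ..
  have R: "G_index M X (k + 2) = real (k + 2) * real (k + 1) * (c - c * emin / mu)"
    unfolding G_index_def using Iw by simp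
  show ?thesis unfolding L R c_def
    by (rule alg1) (use mu in \<open>auto simp: mu_def\<close>)
qed


lemma main_max: assumes mu: "0 < mean_of M X"
  shows "IG_max M X (k + 2) = (1 - 1 / real (k + 2)) * D_index M X (k + 1)"
proof -
  define mu where "mu = mean_of M X"
  let ?w = "\<lambda>u::real. \<bar>u\<bar> ^ k"
  have wc: "continuous_on UNIV ?w" by (intro continuous_intros)
  have wn: "\<And>u. 0 \<le> ?w u" by simp
  define hC where "hC a = (1 - a ^ (k + 2)) / (k + 2) - a * (1 - a ^ (k + 1)) / (k + 1)" for a :: real
  have hC_int: "(\<integral>u\<in>{a..1}. (u - a) * ?w u \<partial>lborel) = hC a" if "0 \<le> a" "a \<le> 1" for a
    unfolding hC_def by (rule intB'[OF that])
  have hC_nn: "0 \<le> hC a" if "0 \<le> a" "a \<le> 1" for a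
  proof -
    have "0 \<le> (\<integral>u\<in>{a..1}. (u - a) * ?w u \<partial>lborel)"
      unfolding set_lebesgue_integral_def by (rule Bochner_Integration.integral_nonneg) (auto simp: indicator_def)
    then show ?thesis using hC_int[OF that] by simp
  qed
  let ?H = "(\<integral>\<^sup>+ u. indicator {0..1} u * Phi u * ennreal (?w u) \<partial>lborel)"
  let ?E = "(\<integral>\<^sup>+ t. indicator {0..} t * ennreal (1 - F t ^ (k + 2)) \<partial>lborel)"
  define h2 where "h2 = enn2real ?H"
  define emax where "emax = enn2real ?E"
  have H: "?H = (\<integral>\<^sup>+ t. indicator {0..} t * ennreal (hC (F t)) \<partial>lborel)"
    unfolding H_eq[OF wc wn] using hC_int[OF F_ge0 F_le1] by simp
  have hCm[measurable]: "(\<lambda>t. hC (F t)) \<in> borel_measurable borel" unfolding hC_def by simp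
  have "ennreal (real (k + 1)) * ?H + ennreal (1 / real (k + 2)) * ?E =
      (\<integral>\<^sup>+ t. ennreal (real (k + 1)) * (indicator {0..} t * ennreal (hC (F t))) \<partial>lborel) +
      (\<integral>\<^sup>+ t. ennreal (1 / real (k + 2)) * (indicator {0..} t * ennreal (1 - F t ^ (k + 2))) \<partial>lborel)"
    unfolding H by (subst (1 2) nn_integral_cmult) simp_all
  also have "\<dots> = (\<integral>\<^sup>+ t. ennreal (real (k + 1)) * (indicator {0..} t * ennreal (hC (F t))) +
       ennreal (1 / real (k + 2)) * (indicator {0..} t * ennreal (1 - F t ^ (k + 2))) \<partial>lborel)"
    by (rule nn_integral_add[symmetric]) simp_all
  also have "\<dots> = Phi 1"
    unfolding Phi_def
  proof (rule nn_integral_cong)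
    fix t
    have f1: "F t ^ (k + 2) \<le> 1" by (rule power_le_one[OF F_ge0 F_le1])
    have "ennreal (real (k + 1)) * ennreal (hC (F t)) + ennreal (1 / real (k + 2)) * ennreal (1 - F t ^ (k + 2))
        = ennreal (real (k + 1) * hC (F t) + (1 - F t ^ (k + 2)) / real (k + 2))"
    proof -
      have n1: "0 \<le> real (k + 1) * hC (F t)" using hC_nn[OF F_ge0 F_le1, of t] by simp
      have n2: "0 \<le> (1 - F t ^ (k + 2)) / real (k + 2)" using f1 by simp
      have p1: "ennreal (real (k + 1)) * ennreal (hC (F t)) = ennreal (real (k + 1) * hC (F t))"
        using hC_nn[OF F_ge0 F_le1, of t] by (intro ennreal_mult[symmetric]) auto
      have p2: "ennreal (1 / real (k + 2)) * ennreal (1 - F t ^ (k + 2)) = ennreal ((1 - F t ^ (k + 2)) / real (k + 2))"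
        using f1 by (subst ennreal_mult[symmetric]) auto
      show ?thesis unfolding p1 p2 using n1 n2 by (rule ennreal_plus[symmetric])
    qed
    also have "real (k + 1) * hC (F t) + (1 - F t ^ (k + 2)) / real (k + 2) = 1 - F t"
      unfolding hC_def by (rule alg3)
    finally show "ennreal (real (k + 1)) * (indicator {0..} t * ennreal (hC (F t))) +
       ennreal (1 / real (k + 2)) * (indicator {0..} t * ennreal (1 - F t ^ (k + 2))) =
       indicator {0..} t * ennreal (1 - F t)"
      by (cases "0 \<le> t") auto
  qed
  also have "\<dots> = ennreal mu" unfolding mu_def by (rule mean_Phi)
  finally have eq: "ennreal (real (k + 1)) * ?H + ennreal (1 / real (k + 2)) * ?E = ennreal mu" .
  have Hf: "?H = ennreal h2" unfolding h2_def using H_fin[OF wc wn] by simp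
  have Ef: "?E = ennreal emax" unfolding emax_def using Emax_fin[of "k + 2"] by simp
  have h2nn: "0 \<le> h2" "0 \<le> emax" unfolding h2_def emax_def by simp_all
  have q1: "ennreal (real (k + 1)) * ennreal h2 = ennreal (real (k + 1) * h2)"
    using h2nn by (intro ennreal_mult[symmetric]) auto
  have q2: "ennreal (1 / real (k + 2)) * ennreal emax = ennreal (emax / real (k + 2))"
    using h2nn by (subst ennreal_mult[symmetric]) auto
  have q3: "ennreal (real (k + 1) * h2) + ennreal (emax / real (k + 2)) = ennreal (real (k + 1) * h2 + emax / real (k + 2))"
    using h2nn by (intro ennreal_plus[symmetric]) auto
  have "ennreal (real (k + 1) * h2 + emax / real (k + 2)) = ennreal mu"
    using eq unfolding Hf Ef q1 q2 q3 .
  then have rel: "real (k + 1) * h2 + emax / real (k + 2) = mu"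
    using h2nn mean_nonneg unfolding mu_def by (subst (asm) ennreal_inj) auto
  have c0: "(\<integral>u\<in>{0..1}. (u - 0) * ?w u \<partial>lborel) = 1 / real (k + 2)"
    using hC_int[of 0] unfolding hC_def by simp
  have Iw: "(\<integral>u. (u - lorenz M X u) * u ^ k \<partial>unif01) = 1 / real (k + 2) - h2 / mu"
    unfolding unif_abs2 I_decomp[OF wc wn] c0 h2_def mu_def ..
  have e: "(\<integral>x. Max (x ` {..<k + 2}) - x 0 \<partial>iid_copies M X (k + 2)) = emax - mu"
    using EmaxR[of "k + 2"] unfolding emax_def mu_def by simp
  have L: "IG_max M X (k + 2) = (emax - mu) / (real (k + 2) * mu)"
    unfolding IG_max_def e mu_def ..
  have R: "D_index M X (k + 1) = real (k + 2) * (1 / real (k + 2) - h2 / mu)"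
    unfolding D_index_def using Iw by simp
  show ?thesis unfolding L R
    by (rule alg2[where A = "real (k + 1)"]) (use mu rel in \<open>auto simp: mu_def\<close>)
qed

end


theorem proposition2p6:
  fixes M :: "'a measure" and X :: "'a \<Rightarrow> real" and m :: nat
  assumes "prob_space M"
    and "X \<in> borel_measurable M"
    and "AE \<omega> in M. 0 \<le> X \<omega>"
    and "integrable M X"
    and "mean_of M X > 0"
    and "2 \<le> m"
  shows "IG_min M X m = (1 / real m) * G_index M X m \<and>
         IG_max M X m = (1 - 1 / real m) * D_index M X (m - 1)"
proof -
  interpret gsetup M X
    unfolding gsetup_def gsetup_axioms_def using assms(1-4) by auto
  obtain k where m: "m = k + 2" using assms(6) by (metis le_add_diff_inverse2)
  have m1: "m - 1 = k + 1" using m by simp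
  show ?thesis
    unfolding m1 unfolding m using main_min[OF assms(5), of k] main_max[OF assms(5), of k] by simp
qed

end
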